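(* Under the setting in the context, fix $\kappa\in\{1,\dots,m-1\}$, $j\in\mathcal U$ and $k\in\mathcal C$, and let $t^*=T^{\mathcal U\setminus\{j\}}_{(\kappa)}$. Then, almost surely, $$\mathbb E\Big[\frac{\delta_{j,k}(t^* )}{|\hat{\mathcal S}_c(t^* )|+1}\,\mathbf 1\{T_j\le t^*,\ T_k\le t^*\}\ \Big|\ (X_i,Y_i)_{i\in\mathcal U\setminus\{j\}}\Big]=0.$$
   Context: Setting: $\hat\mu,g:\mathbb R^d\to\mathbb R$ fixed deterministic measurable functions; calibration indices $\mathcal C$ ($|\mathcal C|=n$) and disjoint test indices $\mathcal U$ ($|\mathcal U|=m\ge2$); $(X_i,Y_i)$, $i\in\mathcal C\cup\mathcal U$, i.i.d. with continuous score and residual distributions; $T_i=g(X_i)$, $R_i=|Y_i-\hat\mu(X_i)|$; $\alpha\in(0,1)$. $T^{\mathcal U\setminus\{j\}}_{(\kappa)}$ is the $\kappa$-th smallest value of $\{T_i\}_{i\in\mathcal U\setminus\{j\}}$. For $t\in\mathbb R$: $\hat{\mathcal S}_c(t)=\{i\in\mathcal C:T_i\le t\}$; $\mathcal Q(t)$ is the $\lceil(1-\alpha)(|\hat{\mathcal S}_c(t)|+1)\rceil$-th smallest value of $\{R_i: i\in\hat{\mathcal S}_c(t)\cup\{j\}\}$; and $\delta_{j,k}(t)=\mathbf 1\{R_j>\mathcal Q(t)\}-\mathbf 1\{R_k>\mathcal Q(t)\}$. *)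

theory Defs
  imports "HOL-Probability.Probability" "HOL-Library.Multiset"
begin

definition kth_smallest :: "nat \<Rightarrow> real multiset \<Rightarrow> real" where
  "kth_smallest k A = sorted_list_of_multiset A ! (k - 1)"

definition sel_cal :: "nat set \<Rightarrow> (nat \<Rightarrow> real) \<Rightarrow> real \<Rightarrow> nat set" where
  "sel_cal C T t = {i \<in> C. T i \<le> t}"

definition Qthr :: "real \<Rightarrow> nat set \<Rightarrow> nat \<Rightarrow> (nat \<Rightarrow> real) \<Rightarrow> (nat \<Rightarrow> real) \<Rightarrow> real \<Rightarrow> real" where
  "Qthr \<alpha> C j T R t =
     kth_smallest (nat \<lceil>(1 - \<alpha>) * (real (card (sel_cal C T t)) + 1)\<rceil>)
                  (image_mset R (mset_set (sel_cal C T t \<union> {j})))"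

definition delta_jk :: "real \<Rightarrow> nat set \<Rightarrow> nat \<Rightarrow> nat \<Rightarrow> (nat \<Rightarrow> real) \<Rightarrow> (nat \<Rightarrow> real) \<Rightarrow> real \<Rightarrow> real" where
  "delta_jk \<alpha> C j k T R t =
     (if R j > Qthr \<alpha> C j T R t then 1 else 0) - (if R k > Qthr \<alpha> C j T R t then 1 else 0)"

definition gen_sigma :: "'a measure \<Rightarrow> (nat \<Rightarrow> 'a \<Rightarrow> 'b::topological_space) \<Rightarrow> nat set \<Rightarrow> 'a measure" where
  "gen_sigma M Z I = sigma (space M) (\<Union>i\<in>I. {Z i -` A \<inter> space M | A. A \<in> sets borel})"

end

theory Submission
  imports Defs
begin

lemma kth_le_iff:
  fixes A :: "real multiset"
  assumes "1 \<le> k" "k \<le> size A"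
  shows "kth_smallest k A \<le> c \<longleftrightarrow> k \<le> size (filter_mset (\<lambda>v. v \<le> c) A)"
proof -
  define s where "s = sorted_list_of_multiset A"
  have ms: "mset s = A" and so: "sorted s" unfolding s_def by auto
  have ls: "length s = size A" using ms by (metis size_mset)
  have "size (filter_mset (\<lambda>v. v \<le> c) A) = length (filter (\<lambda>v. v \<le> c) s)"
    using ms by (metis mset_filter size_mset)
  also have "\<dots> = card {i. i < length s \<and> s ! i \<le> c}" by (rule length_filter_conv_card)
  finally have eq: "size (filter_mset (\<lambda>v. v \<le> c) A) = card {i. i < length s \<and> s ! i \<le> c}" .
  show ?thesis
  proof
    assume h: "kth_smallest k A \<le> c"
    hence h': "s ! (k-1) \<le> c" unfolding kth_smallest_def s_def .
    have "{0..<k} \<subseteq> {i. i < length s \<and> s ! i \<le> c}"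
    proof
      fix i assume "i \<in> {0..<k}"
      hence "i \<le> k - 1" "k - 1 < length s" using assms ls by auto
      hence "s ! i \<le> s ! (k-1)" using so sorted_nth_mono by blast
      thus "i \<in> {i. i < length s \<and> s ! i \<le> c}" using h' \<open>i \<le> k-1\<close> \<open>k-1 < length s\<close> by auto
    qed
    hence "card {0..<k} \<le> card {i. i < length s \<and> s ! i \<le> c}" by (intro card_mono) auto
    thus "k \<le> size (filter_mset (\<lambda>v. v \<le> c) A)" using eq by simp
  next
    assume h: "k \<le> size (filter_mset (\<lambda>v. v \<le> c) A)"
    show "kth_smallest k A \<le> c"
    proof (rule ccontr)
      assume "\<not> kth_smallest k A \<le> c"
      hence h': "s ! (k-1) > c" unfolding kth_smallest_def s_def by simp
      have "{i. i < length s \<and> s ! i \<le> c} \<subseteq> {0..<k-1}"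
      proof
        fix i assume i: "i \<in> {i. i < length s \<and> s ! i \<le> c}"
        show "i \<in> {0..<k-1}"
        proof (rule ccontr)
          assume "i \<notin> {0..<k-1}"
          hence "k - 1 \<le> i" by auto
          hence "s ! (k-1) \<le> s ! i" using so sorted_nth_mono i by blast
          thus False using i h' by auto
        qed
      qed
      hence "card {i. i < length s \<and> s ! i \<le> c} \<le> card {0..<k-1}" by (intro card_mono) auto
      thus False using eq h assms by simp
    qed
  qed
qed

lemma size_filter_image_mset_set:
  "finite V \<Longrightarrow> size (filter_mset P (image_mset f (mset_set V))) = card {i\<in>V. P (f i)}"
  by (simp add: filter_mset_image_mset filter_mset_mset_set)

lemma meas_kth:
  fixes f :: "nat \<Rightarrow> 'a \<Rightarrow> real"
  assumes "finite V" "1 \<le> k" "k \<le> card V" "\<And>i. i \<in> V \<Longrightarrow> f i \<in> borel_measurable N"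
  shows "(\<lambda>x. kth_smallest k (image_mset (\<lambda>i. f i x) (mset_set V))) \<in> borel_measurable N"
proof (subst borel_measurable_iff_le, intro allI)
  fix c
  have "{w \<in> space N. kth_smallest k (image_mset (\<lambda>i. f i w) (mset_set V)) \<le> c}
     = {w \<in> space N. real k \<le> (\<Sum>i\<in>V. if f i w \<le> c then 1 else 0)}"
  proof -
    have "\<And>w. kth_smallest k (image_mset (\<lambda>i. f i w) (mset_set V)) \<le> c \<longleftrightarrow> k \<le> card {i\<in>V. f i w \<le> c}"
      using assms by (subst kth_le_iff) (auto simp: size_filter_image_mset_set)
    moreover have "\<And>w. real (card {i\<in>V. f i w \<le> c}) = (\<Sum>i\<in>V. if f i w \<le> c then 1 else 0)"
      using assms(1) by (simp add: sum.If_cases Int_def)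
    ultimately show ?thesis by (metis (no_types, lifting) of_nat_le_iff)
  qed
  also have "\<dots> \<in> sets N" using assms(4) by measurable
  finally show "{w \<in> space N. kth_smallest k (image_mset (\<lambda>i. f i w) (mset_set V)) \<le> c} \<in> sets N" .
qed


definition Eexp :: "real \<Rightarrow> nat set \<Rightarrow> nat set \<Rightarrow> nat \<Rightarrow> nat \<Rightarrow> nat \<Rightarrow> (nat\<Rightarrow>real) \<Rightarrow> (nat\<Rightarrow>real) \<Rightarrow> real" where
 "Eexp \<alpha> C U \<kappa> j k T R = (let tstar = kth_smallest \<kappa> (image_mset T (mset_set (U - {j})))
    in delta_jk \<alpha> C j k T R tstar / (real (card (sel_cal C T tstar)) + 1)
              * (if T j \<le> tstar \<and> T k \<le> tstar then 1 else 0))"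

definition swp :: "nat \<Rightarrow> nat \<Rightarrow> nat \<Rightarrow> nat" where
  "swp j k i = (if i = j then k else if i = k then j else i)"

lemma Eexp_cong:
  assumes "\<And>i. i \<in> C \<union> U \<Longrightarrow> T' i = T i" "\<And>i. i \<in> C \<union> U \<Longrightarrow> R' i = R i"
    and "j \<in> U" "k \<in> C"
  shows "Eexp \<alpha> C U \<kappa> j k T' R' = Eexp \<alpha> C U \<kappa> j k T R"
proof -
  have t: "image_mset T' (mset_set (U - {j})) = image_mset T (mset_set (U - {j}))"
  proof (rule image_mset_cong)
    fix x assume "x \<in># mset_set (U - {j})"
    hence "x \<in> U - {j}" by (metis elem_mset_set empty_iff mset_set.infinite set_mset_empty)
    thus "T' x = T x" using assms by auto
  qed
  have s: "sel_cal C T' t = sel_cal C T t" for t using assms unfolding sel_cal_def by auto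
  have r: "image_mset R' (mset_set (sel_cal C T t \<union> {j})) = image_mset R (mset_set (sel_cal C T t \<union> {j}))" for t
  proof (cases "finite (sel_cal C T t)")
    case True thus ?thesis
      by (intro image_mset_cong) (use assms in \<open>auto simp: sel_cal_def\<close>)
  qed simp
  show ?thesis unfolding Eexp_def delta_jk_def Qthr_def t s r using assms by auto
qed

lemma Eexp_swap:
  assumes "\<And>i. i \<in> C \<union> U \<Longrightarrow> T' i = T (swp j k i)" "\<And>i. i \<in> C \<union> U \<Longrightarrow> R' i = R (swp j k i)"
    and "j \<in> U" "k \<in> C" "C \<inter> U = {}" "finite C"
  shows "Eexp \<alpha> C U \<kappa> j k T' R' = - Eexp \<alpha> C U \<kappa> j k T R"
proof -
  have jk: "j \<noteq> k" "j \<notin> C" "k \<notin> U" using assms by auto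
  have sw: "swp j k j = k" "swp j k k = j" "\<And>i. i \<noteq> j \<Longrightarrow> i \<noteq> k \<Longrightarrow> swp j k i = i"
    unfolding swp_def by auto
  have t: "image_mset T' (mset_set (U - {j})) = image_mset T (mset_set (U - {j}))"
  proof (rule image_mset_cong)
    fix x assume "x \<in># mset_set (U - {j})"
    hence "x \<in> U - {j}" by (metis elem_mset_set empty_iff mset_set.infinite set_mset_empty)
    hence "x \<noteq> k" "x \<noteq> j" using jk by auto
    thus "T' x = T x" using assms(1) sw(3) \<open>x \<in> U - {j}\<close> by auto
  qed
  define t where "t = kth_smallest \<kappa> (image_mset T (mset_set (U - {j})))"
  have T'j: "T' j = T k" and T'k: "T' k = T j" and R'j: "R' j = R k" and R'k: "R' k = R j"
    using assms sw by auto
  show ?thesis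
  proof (cases "T j \<le> t \<and> T k \<le> t")
    case False
    thus ?thesis unfolding Eexp_def Let_def t[folded t_def] t_def[symmetric] T'j T'k by auto
  next
    case True
    have s: "sel_cal C T' t = sel_cal C T t"
    proof -
      have "i \<in> C \<Longrightarrow> T' i \<le> t \<longleftrightarrow> T i \<le> t" for i
      proof (cases "i = k")
        case True thus "i \<in> C \<Longrightarrow> ?thesis" using T'k \<open>T j \<le> t \<and> T k \<le> t\<close> by simp
      next
        case False
        assume "i \<in> C" hence "i \<noteq> j" using jk by auto
        thus ?thesis using False assms(1) sw \<open>i \<in> C\<close> by simp
      qed
      thus ?thesis unfolding sel_cal_def by auto
    qed
    let ?S = "sel_cal C T t \<union> {j}"
    have fS: "finite ?S" using assms(6) unfolding sel_cal_def by auto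
    have kS: "k \<in> ?S" using True assms unfolding sel_cal_def by auto
    have inj: "inj_on (swp j k) ?S" unfolding swp_def inj_on_def by auto
    have img: "swp j k ` ?S = ?S"
    proof
      show "swp j k ` ?S \<subseteq> ?S" using kS unfolding swp_def by auto
      show "?S \<subseteq> swp j k ` ?S"
      proof
        fix i assume i: "i \<in> ?S"
        have "swp j k (swp j k i) = i" unfolding swp_def by auto
        moreover have "swp j k i \<in> ?S" using i kS unfolding swp_def by auto
        ultimately show "i \<in> swp j k ` ?S" by (metis imageI)
      qed
    qed
    have "image_mset R' (mset_set ?S) = image_mset (\<lambda>i. R (swp j k i)) (mset_set ?S)"
      by (rule image_mset_cong) (use assms fS in \<open>auto simp: sel_cal_def\<close>)
    also have "\<dots> = image_mset R (image_mset (swp j k) (mset_set ?S))" by (simp add: image_mset.compositionality o_def)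
    also have "\<dots> = image_mset R (mset_set ?S)" using image_mset_mset_set[OF inj] img by simp
    finally have r: "image_mset R' (mset_set ?S) = image_mset R (mset_set ?S)" .
    show ?thesis unfolding Eexp_def Let_def t[folded t_def] t_def[symmetric] delta_jk_def Qthr_def s r R'j R'k T'j T'k
      by simp
  qed
qed


lemma meas_Eexp:
  fixes Tf Rf :: "nat \<Rightarrow> 'a \<Rightarrow> real"
  assumes fin: "finite C" "finite U" and dis: "C \<inter> U = {}" and jk: "j \<in> U" "k \<in> C"
    and ka: "1 \<le> \<kappa>" "\<kappa> \<le> card U - 1" and al: "0 < \<alpha>" "\<alpha> < 1"
    and Tm: "\<And>i. i \<in> C \<union> U \<Longrightarrow> Tf i \<in> borel_measurable N"
    and Rm: "\<And>i. i \<in> C \<union> U \<Longrightarrow> Rf i \<in> borel_measurable N"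
  shows "(\<lambda>x. Eexp \<alpha> C U \<kappa> j k (\<lambda>i. Tf i x) (\<lambda>i. Rf i x)) \<in> borel_measurable N"
proof -
  define ts where "ts x = kth_smallest \<kappa> (image_mset (\<lambda>i. Tf i x) (mset_set (U - {j})))" for x
  have tsm[measurable]: "ts \<in> borel_measurable N" unfolding ts_def
    using fin ka jk Tm by (intro meas_kth) auto
  define sel where "sel x = sel_cal C (\<lambda>i. Tf i x) (ts x)" for x
  define Q where "Q S x = kth_smallest (nat \<lceil>(1 - \<alpha>) * (real (card S) + 1)\<rceil>)
                  (image_mset (\<lambda>i. Rf i x) (mset_set (S \<union> {j})))" for S x
  define G where "G S x = ((if Rf j x > Q S x then 1 else 0) - (if Rf k x > Q S x then 1 else 0))
       / (real (card S) + 1) * (if Tf j x \<le> ts x \<and> Tf k x \<le> ts x then 1 else 0::real)" for S x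
  have eq: "Eexp \<alpha> C U \<kappa> j k (\<lambda>i. Tf i x) (\<lambda>i. Rf i x) = G (sel x) x" for x
    unfolding Eexp_def delta_jk_def Qthr_def Let_def G_def Q_def sel_def ts_def by simp
  have Gm: "G S \<in> borel_measurable N" if S: "S \<in> Pow C" for S
  proof -
    have fS: "finite S" using S fin finite_subset by auto
    have jS: "j \<notin> S" using S dis jk by auto
    have cS: "card (S \<union> {j}) = card S + 1" using fS jS by simp
    have c1: "(1 - \<alpha>) * (real (card S) + 1) > 0" using al by simp
    have c2: "(1 - \<alpha>) * (real (card S) + 1) \<le> real (card S) + 1" using al by (simp add: mult_le_cancel_right1)
    have "1 \<le> nat \<lceil>(1 - \<alpha>) * (real (card S) + 1)\<rceil>" using c1 by linarith
    moreover have "nat \<lceil>(1 - \<alpha>) * (real (card S) + 1)\<rceil> \<le> card (S \<union> {j})" using c2 cS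
      by (metis ceiling_mono ceiling_of_nat nat_mono nat_int of_nat_1 of_nat_add)
    ultimately have [measurable]: "Q S \<in> borel_measurable N" unfolding Q_def
      using fS S jk by (intro meas_kth) (auto intro!: Rm)
    have [measurable]: "Rf j \<in> borel_measurable N" "Rf k \<in> borel_measurable N"
      "Tf j \<in> borel_measurable N" "Tf k \<in> borel_measurable N" using jk Tm Rm by auto
    show ?thesis unfolding G_def by measurable
  qed
  have selm: "sel \<in> measurable N (count_space (Pow C))"
  proof (subst measurable_count_space_eq2)
    show "finite (Pow C)" using fin by simp
    show "sel \<in> space N \<rightarrow> Pow C \<and> (\<forall>a\<in>Pow C. sel -` {a} \<inter> space N \<in> sets N)"
    proof (intro conjI ballI)
      show "sel \<in> space N \<rightarrow> Pow C" unfolding sel_def sel_cal_def by auto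
    next
      fix S assume S: "S \<in> Pow C"
      have "sel -` {S} \<inter> space N = {x \<in> space N. \<forall>i\<in>C. (i \<in> S \<longleftrightarrow> Tf i x \<le> ts x)}"
        using S unfolding sel_def sel_cal_def by auto
      also have "\<dots> \<in> sets N"
      proof (intro sets.sets_Collect_finite_All' fin)
        fix i assume "i \<in> C"
        hence [measurable]: "Tf i \<in> borel_measurable N" using Tm by auto
        show "{x \<in> space N. (i \<in> S) = (Tf i x \<le> ts x)} \<in> sets N" by measurable
      qed (use jk in auto)
      finally show "sel -` {S} \<inter> space N \<in> sets N" .
    qed
  qed
  have "(\<lambda>x. G (sel x) x) \<in> borel_measurable N"
    by (rule measurable_compose_countable'[OF Gm selm]) (use fin in \<open>auto intro: countable_finite\<close>)
  thus ?thesis unfolding eq .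
qed


lemma Eexp_bound: "\<bar>Eexp \<alpha> C U \<kappa> j k T R\<bar> \<le> 1"
proof -
  have d: "\<bar>delta_jk \<alpha> C j k T R t\<bar> \<le> 1" for t unfolding delta_jk_def by auto
  have q: "\<bar>x / (real n + 1)\<bar> \<le> 1" if "\<bar>x\<bar> \<le> 1" for x :: real and n
  proof -
    have p: "real n + 1 \<ge> 1" by simp
    have "\<bar>x / (real n + 1)\<bar> = \<bar>x\<bar> / (real n + 1)" by (simp add: abs_divide)
    also have "\<dots> \<le> \<bar>x\<bar> / 1" using p by (intro divide_left_mono) auto
    finally show ?thesis using that by simp
  qed
  have r: "\<bar>y * (if P then 1 else 0)\<bar> \<le> 1" if "\<bar>y\<bar> \<le> 1" for y :: real and P
    using that by simp
  show ?thesis unfolding Eexp_def Let_def by (rule r[OF q[OF d]])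
qed

theorem lemma10:
  fixes M :: "'w measure"
    and X :: "nat \<Rightarrow> 'w \<Rightarrow> 'x::euclidean_space"
    and Y :: "nat \<Rightarrow> 'w \<Rightarrow> real"
    and muhat g :: "'x \<Rightarrow> real"
    and C U :: "nat set" and \<alpha> :: real and \<kappa> j k :: nat
  assumes "prob_space M"
    and "muhat \<in> borel_measurable borel" and "g \<in> borel_measurable borel"
    and "finite C" and "finite U" and "C \<inter> U = {}" and "card U \<ge> 2"
    and "\<And>i. i \<in> C \<union> U \<Longrightarrow> X i \<in> borel_measurable M"
    and "\<And>i. i \<in> C \<union> U \<Longrightarrow> Y i \<in> borel_measurable M"
    and "prob_space.indep_vars M (\<lambda>_. borel) (\<lambda>i \<omega>. (X i \<omega>, Y i \<omega>)) (C \<union> U)"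
    and "\<And>i i'. i \<in> C \<union> U \<Longrightarrow> i' \<in> C \<union> U \<Longrightarrow>
           distr M borel (\<lambda>\<omega>. (X i \<omega>, Y i \<omega>)) = distr M borel (\<lambda>\<omega>. (X i' \<omega>, Y i' \<omega>))"
    and "\<And>i s. i \<in> C \<union> U \<Longrightarrow> measure M {\<omega> \<in> space M. g (X i \<omega>) = s} = 0"
    and "\<And>i s. i \<in> C \<union> U \<Longrightarrow> measure M {\<omega> \<in> space M. \<bar>Y i \<omega> - muhat (X i \<omega>)\<bar> = s} = 0"
    and "0 < \<alpha>" and "\<alpha> < 1"
    and "1 \<le> \<kappa>" and "\<kappa> \<le> card U - 1"
    and "j \<in> U" and "k \<in> C"
  shows "AE \<omega> in M.
    real_cond_exp M (gen_sigma M (\<lambda>i \<omega>. (X i \<omega>, Y i \<omega>)) (U - {j}))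
      (\<lambda>\<omega>. let T = (\<lambda>i. g (X i \<omega>));
               R = (\<lambda>i. \<bar>Y i \<omega> - muhat (X i \<omega>)\<bar>);
               tstar = kth_smallest \<kappa> (image_mset T (mset_set (U - {j})))
           in delta_jk \<alpha> C j k T R tstar / (real (card (sel_cal C T tstar)) + 1)
              * (if T j \<le> tstar \<and> T k \<le> tstar then 1 else 0)) \<omega> = 0"
proof -
  interpret prob_space M by fact
  note gm[measurable] = assms(3) and mum[measurable] = assms(2)
  have finC: "finite C" and finU: "finite U" and dis: "C \<inter> U = {}" and jU: "j \<in> U" and kC: "k \<in> C"
    using assms by auto
  define I where "I = C \<union> U"
  have finI: "finite I" "I \<noteq> {}" using finC finU jU unfolding I_def by auto
  define Z where "Z = (\<lambda>i \<omega>. (X i \<omega>, Y i \<omega>))"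
  have Zm[measurable]: "Z i \<in> borel_measurable M" if "i \<in> I" for i
  proof -
    have [measurable]: "X i \<in> borel_measurable M" "Y i \<in> borel_measurable M"
      using assms(8,9) that unfolding I_def by auto
    have "Z i \<in> measurable M (borel \<Otimes>\<^sub>M borel)" unfolding Z_def by measurable
    thus ?thesis by (simp add: borel_prod)
  qed
  define \<tau> where "\<tau> = swp j k"
  have \<tau>I: "\<tau> i \<in> I" if "i \<in> I" for i using that jU kC unfolding \<tau>_def swp_def I_def by auto
  have \<tau>inj: "inj_on \<tau> I" unfolding \<tau>_def swp_def inj_on_def by auto
  define Tx where "Tx x i = g (fst (x i))" for x :: "nat \<Rightarrow> 'x \<times> real" and i
  define Rx where "Rx x i = \<bar>snd (x i) - muhat (fst (x i))\<bar>" for x :: "nat \<Rightarrow> 'x \<times> real" and i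
  define h where "h x = Eexp \<alpha> C U \<kappa> j k (Tx x) (Rx x)" for x
  define PB where "PB = (PiM I (\<lambda>_. borel) :: (nat \<Rightarrow> 'x \<times> real) measure)"
  define N where "N = distr M borel (Z k)"
  define P where "P = PiM I (\<lambda>_. N)"
  have kI: "k \<in> I" using kC unfolding I_def by auto
  have probN: "prob_space N" unfolding N_def by (rule prob_space_distr) (use kI in measurable)
  have setsN: "sets N = sets borel" unfolding N_def by simp
  have setsP: "sets P = sets PB" unfolding P_def PB_def by (rule sets_PiM_cong) (auto simp: setsN)
  have spP: "space P = space PB" using setsP by (rule sets_eq_imp_space_eq)
  define Zv where "Zv \<omega> = (\<lambda>i\<in>I. Z i \<omega>)" for \<omega>
  define \<sigma>v where "\<sigma>v x = (\<lambda>i\<in>I. x (\<tau> i))" for x :: "nat \<Rightarrow> 'x \<times> real"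
  have Zvm: "Zv \<in> measurable M PB" unfolding Zv_def PB_def
    by (rule measurable_restrict) (rule Zm)
  have \<sigma>vm: "\<sigma>v \<in> measurable PB PB" unfolding \<sigma>v_def PB_def
    by (rule measurable_restrict) (use \<tau>I in \<open>auto intro!: measurable_component_singleton\<close>)
  have hm: "h \<in> borel_measurable PB"
  proof -
    have "(\<lambda>x. Eexp \<alpha> C U \<kappa> j k (\<lambda>i. Tx x i) (\<lambda>i. Rx x i)) \<in> borel_measurable PB"
    proof (rule meas_Eexp)
      fix i assume i: "i \<in> C \<union> U"
      have "(\<lambda>x. x i) \<in> measurable PB borel" unfolding PB_def
        using i I_def by (intro measurable_component_singleton) auto
      hence [measurable]: "(\<lambda>x. x i) \<in> measurable PB (borel \<Otimes>\<^sub>M borel)" by (simp add: borel_prod)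
      show "(\<lambda>x. Tx x i) \<in> borel_measurable PB" unfolding Tx_def by measurable
      show "(\<lambda>x. Rx x i) \<in> borel_measurable PB" unfolding Rx_def by measurable
    qed (use assms in auto)
    thus ?thesis unfolding h_def by simp
  qed
  have indep: "indep_vars (\<lambda>_. borel) Z I" using assms(10) unfolding Z_def I_def by simp
  have law: "distr M PB Zv = P"
  proof -
    have "distr M PB Zv = PiM I (\<lambda>i. distr M borel (Z i))"
      unfolding PB_def Zv_def
      by (rule indep_vars_iff_distr_eq_PiM'[THEN iffD1, OF finI(2) _ indep]) (rule Zm)
    also have "\<dots> = P" unfolding P_def N_def
    proof (rule PiM_cong)
      fix i assume "i \<in> I"
      thus "distr M borel (Z i) = distr M borel (Z k)" unfolding Z_def using assms(11)[of i k] kI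
        unfolding I_def by blast
    qed simp
    finally show ?thesis .
  qed
  have swapinv: "distr P PB \<sigma>v = P"
  proof -
    have "distr P P \<sigma>v = P" unfolding P_def \<sigma>v_def
      using distr_PiM_reindex[of I "\<lambda>_. N" \<tau> I] probN \<tau>inj \<tau>I by auto
    moreover have "distr P PB \<sigma>v = distr P P \<sigma>v" by (rule distr_cong) (auto simp: setsP)
    ultimately show ?thesis by simp
  qed
  have Zvsp: "Zv \<omega> \<in> space PB" if "\<omega> \<in> space M" for \<omega> using measurable_space[OF Zvm that] .
  have \<sigma>vsp: "\<sigma>v x \<in> space PB" if "x \<in> space PB" for x using measurable_space[OF \<sigma>vm that] .
  define Gen where "Gen = (\<Union>i\<in>U-{j}. {Z i -` A \<inter> space M | A. A \<in> sets borel})"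
  define F where "F = gen_sigma M Z (U - {j})"
  have GenP: "Gen \<subseteq> Pow (space M)" unfolding Gen_def by auto
  have setsF: "sets F = sigma_sets (space M) Gen"
    unfolding F_def gen_sigma_def Gen_def by (rule sets_measure_of) auto
  have spF: "space F = space M"
    unfolding F_def gen_sigma_def Gen_def by (rule space_measure_of) auto
  have GenM: "Gen \<subseteq> sets M"
  proof
    fix a assume "a \<in> Gen"
    then obtain i A' where i: "i \<in> U - {j}" "A' \<in> sets borel" "a = Z i -` A' \<inter> space M"
      unfolding Gen_def by auto
    have "i \<in> I" using i unfolding I_def by auto
    thus "a \<in> sets M" using i measurable_sets[OF Zm] by auto
  qed
  have subF: "sets F \<subseteq> sets M" using setsF GenM sets.sigma_sets_subset[of Gen M] by simp
  have "finite_measure_subalgebra M F"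
    unfolding finite_measure_subalgebra_def finite_measure_subalgebra_axioms_def subalgebra_def
    using spF subF finite_measure_axioms by auto
  then interpret FS: finite_measure_subalgebra M F .
  have inv: "\<exists>B\<in>sets PB. A = Zv -` B \<inter> space M \<and> (\<forall>x\<in>space PB. \<sigma>v x \<in> B \<longleftrightarrow> x \<in> B)"
    if "A \<in> sigma_sets (space M) Gen" for A
    using that
  proof (induction rule: sigma_sets.induct)
    case (Basic a)
    then obtain i A' where i: "i \<in> U - {j}" "A' \<in> sets borel" "a = Z i -` A' \<inter> space M"
      unfolding Gen_def by auto
    have iI: "i \<in> I" using i unfolding I_def by auto
    have \<tau>i: "\<tau> i = i" using i kC dis unfolding \<tau>_def swp_def by auto
    define B where "B = (\<lambda>x. x i) -` A' \<inter> space PB"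
    have "B \<in> sets PB" unfolding B_def PB_def
      by (rule measurable_sets[OF measurable_component_singleton[OF iI] i(2)])
    moreover have "a = Zv -` B \<inter> space M" using i(3) Zvsp iI unfolding B_def Zv_def by auto
    moreover have "\<forall>x\<in>space PB. \<sigma>v x \<in> B \<longleftrightarrow> x \<in> B"
      using \<sigma>vsp iI \<tau>i unfolding B_def \<sigma>v_def by auto
    ultimately show ?case by blast
  next
    case Empty
    show ?case by (rule bexI[of _ "{}"]) auto
  next
    case (Compl a)
    then obtain B where B: "B \<in> sets PB" "a = Zv -` B \<inter> space M" "\<forall>x\<in>space PB. \<sigma>v x \<in> B \<longleftrightarrow> x \<in> B"
      by blast
    show ?case
    proof (rule bexI[of _ "space PB - B"])
      show "space PB - B \<in> sets PB" using B by auto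
      show "space M - a = Zv -` (space PB - B) \<inter> space M \<and> (\<forall>x\<in>space PB. \<sigma>v x \<in> space PB - B \<longleftrightarrow> x \<in> space PB - B)"
        using B Zvsp \<sigma>vsp by auto
    qed
  next
    case (Union a)
    have ex: "\<exists>B. B \<in> sets PB \<and> a n = Zv -` B \<inter> space M \<and> (\<forall>x\<in>space PB. \<sigma>v x \<in> B \<longleftrightarrow> x \<in> B)" for n
      using Union.IH[of n] by (simp only: Bex_def)
    define Bf where "Bf n = (SOME B. B \<in> sets PB \<and> a n = Zv -` B \<inter> space M \<and> (\<forall>x\<in>space PB. \<sigma>v x \<in> B \<longleftrightarrow> x \<in> B))" for n
    have Bf': "Bf n \<in> sets PB \<and> a n = Zv -` Bf n \<inter> space M \<and> (\<forall>x\<in>space PB. \<sigma>v x \<in> Bf n \<longleftrightarrow> x \<in> Bf n)" for n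
      unfolding Bf_def by (rule someI_ex[OF ex])
    have Bf: "\<And>n. Bf n \<in> sets PB" "\<And>n. a n = Zv -` Bf n \<inter> space M"
      "\<And>n. \<forall>x\<in>space PB. \<sigma>v x \<in> Bf n \<longleftrightarrow> x \<in> Bf n" using Bf' by auto
    show ?case
    proof (rule bexI[of _ "\<Union>n. Bf n"])
      show "(\<Union>n. Bf n) \<in> sets PB" using Bf by auto
      show "\<Union> (range a) = Zv -` (\<Union>n. Bf n) \<inter> space M \<and> (\<forall>x\<in>space PB. \<sigma>v x \<in> (\<Union>n. Bf n) \<longleftrightarrow> x \<in> (\<Union>n. Bf n))"
        using Bf by auto
    qed
  qed
  define f where "f \<omega> = h (Zv \<omega>)" for \<omega>
  have fm: "f \<in> borel_measurable M" unfolding f_def by (rule measurable_compose[OF Zvm hm])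
  have fint: "integrable M f"
  proof (rule integrable_const_bound[where B=1])
    show "AE x in M. norm (f x) \<le> 1" by (simp add: f_def h_def Eexp_bound)
  qed (rule fm)
  have int0: "(\<integral>x\<in>A. f x \<partial>M) = (\<integral>x\<in>A. 0 \<partial>M)" if A: "A \<in> sets F" for A
  proof -
    obtain B where B: "B \<in> sets PB" "A = Zv -` B \<inter> space M" "\<forall>x\<in>space PB. \<sigma>v x \<in> B \<longleftrightarrow> x \<in> B"
      using inv A setsF by auto
    define G where "G x = indicator B x * h x" for x
    have Gm: "G \<in> borel_measurable PB" using B hm unfolding G_def by measurable
    have "(\<integral>x\<in>A. f x \<partial>M) = (\<integral>\<omega>. G (Zv \<omega>) \<partial>M)"
      unfolding set_lebesgue_integral_def G_def f_def
      by (rule Bochner_Integration.integral_cong) (auto simp: B indicator_def Zvsp)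
    also have "\<dots> = (\<integral>x. G x \<partial>distr M PB Zv)" by (rule integral_distr[symmetric, OF Zvm Gm])
    also have "\<dots> = (\<integral>x. G x \<partial>P)" by (simp add: law)
    finally have e1: "(\<integral>x\<in>A. f x \<partial>M) = (\<integral>x. G x \<partial>P)" .
    have \<sigma>vmP: "\<sigma>v \<in> measurable P PB" using \<sigma>vm measurable_cong_sets[OF setsP, of PB PB] by simp
    have "(\<integral>x. G x \<partial>P) = (\<integral>x. G x \<partial>distr P PB \<sigma>v)" by (simp add: swapinv)
    also have "\<dots> = (\<integral>x. G (\<sigma>v x) \<partial>P)" by (rule integral_distr[OF \<sigma>vmP Gm])
    also have "\<dots> = (\<integral>x. - G x \<partial>P)"
    proof (rule Bochner_Integration.integral_cong[OF refl])
      fix x assume x: "x \<in> space P"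
      hence xs: "x \<in> space PB" using spP by simp
      have "h (\<sigma>v x) = - h x" unfolding h_def
      proof (rule Eexp_swap)
        fix i assume "i \<in> C \<union> U"
        hence "i \<in> I" unfolding I_def .
        thus "Tx (\<sigma>v x) i = Tx x (swp j k i)" "Rx (\<sigma>v x) i = Rx x (swp j k i)"
          unfolding Tx_def Rx_def \<sigma>v_def \<tau>_def by auto
      qed (use assms in auto)
      thus "G (\<sigma>v x) = - G x" unfolding G_def using B(3) xs by (simp add: indicator_def)
    qed
    also have "\<dots> = - (\<integral>x. G x \<partial>P)" by simp
    finally show ?thesis using e1 by simp
  qed
  have ae: "AE \<omega> in M. real_cond_exp M F f \<omega> = 0"
    by (rule FS.real_cond_exp_charact) (auto simp: int0 fint)
  have feq: "(\<lambda>\<omega>. let T = (\<lambda>i. g (X i \<omega>));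
               R = (\<lambda>i. \<bar>Y i \<omega> - muhat (X i \<omega>)\<bar>);
               tstar = kth_smallest \<kappa> (image_mset T (mset_set (U - {j})))
           in delta_jk \<alpha> C j k T R tstar / (real (card (sel_cal C T tstar)) + 1)
              * (if T j \<le> tstar \<and> T k \<le> tstar then 1 else 0)) = f"
  proof
    fix \<omega>
    have "f \<omega> = Eexp \<alpha> C U \<kappa> j k (\<lambda>i. g (X i \<omega>)) (\<lambda>i. \<bar>Y i \<omega> - muhat (X i \<omega>)\<bar>)"
      unfolding f_def h_def
      by (rule Eexp_cong) (use jU kC in \<open>auto simp: Tx_def Rx_def Zv_def Z_def I_def\<close>)
    thus "(let T = (\<lambda>i. g (X i \<omega>));
               R = (\<lambda>i. \<bar>Y i \<omega> - muhat (X i \<omega>)\<bar>);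
               tstar = kth_smallest \<kappa> (image_mset T (mset_set (U - {j})))
           in delta_jk \<alpha> C j k T R tstar / (real (card (sel_cal C T tstar)) + 1)
              * (if T j \<le> tstar \<and> T k \<le> tstar then 1 else 0)) = f \<omega>"
      unfolding Eexp_def Let_def by simp
  qed
  have Feq: "gen_sigma M (\<lambda>i \<omega>. (X i \<omega>, Y i \<omega>)) (U - {j}) = F" unfolding F_def Z_def ..
  show ?thesis unfolding feq Feq by (rule ae)
qed

end
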